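(* Let $n$ be a power of $2$, let $w\ge1$, and let $\mathbf{M}_1,\dots,\mathbf{M}_n$ be $w\times w$ real matrices. For every $(\ell,r)\in\mathsf{BS}_n$ with $r-\ell\ge2$ let $\mathbf{M}^{(0)}_{\ell..r}$ be a given $w\times w$ real matrix, and set $\mathbf{M}^{(0)}_{r-1..r}=\mathbf{M}_r$. Define $\mathbf{M}^{(k)}_{\ell..r}$ for all integers $k\ge0$ and $(\ell,r)\in\mathsf{BS}_n$ by the recursion in the context. Then for every integer $k\ge0$ and every $(\ell,r)\in\mathsf{BS}_n$ there is a multiset $S\subseteq\mathsf{IS}_{\ell..r}\times\{-1,+1\}$ such that (i) $\mathbf{M}^{(k)}_{\ell..r}=\sum_{(\mathsf{sq},\sigma)\in S}\sigma\,\mathbf{M}^{(0)}_{\mathsf{sq}}$; (ii) $|S|\le(r-\ell)^{2k}$; (iii) for every $(\mathsf{sq},\sigma)\in S$, the length of $\mathsf{sq}$ is at most $k\log(r-\ell)+1$.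
   Context: Logarithms are base $2$. $\mathsf{BS}_n=\{(\ell,r):\exists i,k\ge 0,\ \ell=i2^k,\ r=\ell+2^k,\ 0\le\ell<r\le n\}$. Recursion: for $(\ell,r)\in\mathsf{BS}_n$ with $r-\ell=1$, $\mathbf{M}^{(k)}_{\ell..r}=\mathbf{M}_r$ for all $k\ge0$; for $r-\ell\ge2$ and $k\ge1$, with $m=(\ell+r)/2$, $$\mathbf{M}^{(k)}_{\ell..r}=\sum_{i+j=k}\mathbf{M}^{(i)}_{\ell..m}\mathbf{M}^{(j)}_{m..r}-\sum_{i+j=k-1}\mathbf{M}^{(i)}_{\ell..m}\mathbf{M}^{(j)}_{m..r}$$ (sums over integers $i,j\ge0$). For $0\le\ell<r\le n$, $\mathsf{IS}_{\ell..r}$ is the set of increasing sequences $\mathsf{sq}=(i_0,i_1,\dots,i_h)$ with $\ell=i_0<i_1<\dots<i_h=r$; $h$ is the length of $\mathsf{sq}$. In the sequences appearing here each consecutive pair $(i_{j-1},i_j)$ lies in $\mathsf{BS}_n$, and $\mathbf{M}^{(0)}_{\mathsf{sq}}=\prod_{j=1}^h\mathbf{M}^{(0)}_{i_{j-1}..i_j}$. *)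

theory Defs
  imports "HOL-Analysis.Analysis" "HOL-Library.Multiset"
begin

type_synonym 'w rmat = "real ^ 'w ^ 'w"

definition BS :: "nat \<Rightarrow> (nat \<times> nat) set" where
  "BS n = {(l, r). \<exists>i k. l = i * 2 ^ k \<and> r = l + 2 ^ k \<and> 0 \<le> l \<and> l < r \<and> r \<le> n}"

function Mk :: "(nat \<Rightarrow> 'w::finite rmat) \<Rightarrow> (nat \<Rightarrow> nat \<Rightarrow> 'w rmat)
                   \<Rightarrow> nat \<Rightarrow> nat \<Rightarrow> nat \<Rightarrow> 'w rmat" where
  "Mk M M0 k l r =
     (if r - l \<le> 1 then M r
      else if k = 0 then M0 l r
      else (let m = (l + r) div 2 in
              (\<Sum>i\<le>k. Mk M M0 i l m ** Mk M M0 (k - i) m r)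
            - (\<Sum>i\<le>k - 1. Mk M M0 i l m ** Mk M M0 (k - 1 - i) m r)))"
  by pat_completeness auto
termination
  by (relation "Wellfounded.measure (\<lambda>(M, M0, k, l, r). r - l)") auto

text \<open>M^(0)_{l..r}: equals M_r when r - l = 1, and the given matrix otherwise.\<close>
definition M0blk :: "(nat \<Rightarrow> 'w::finite rmat) \<Rightarrow> (nat \<Rightarrow> nat \<Rightarrow> 'w rmat)
                   \<Rightarrow> nat \<Rightarrow> nat \<Rightarrow> 'w rmat" where
  "M0blk M M0 l r = Mk M M0 0 l r"

definition IS :: "nat \<Rightarrow> nat \<Rightarrow> nat list set" where
  "IS l r = {sq. sq \<noteq> [] \<and> hd sq = l \<and> last sq = r \<and> sorted_wrt (<) sq}"

definition seq_len :: "nat list \<Rightarrow> nat" where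
  "seq_len sq = length sq - 1"

definition M0seq :: "(nat \<Rightarrow> 'w::finite rmat) \<Rightarrow> (nat \<Rightarrow> nat \<Rightarrow> 'w rmat)
                   \<Rightarrow> nat list \<Rightarrow> 'w rmat" where
  "M0seq M M0 sq = foldr (\<lambda>(a, b) acc. M0blk M M0 a b ** acc) (zip sq (tl sq)) (mat 1)"

end

theory Submission
  imports Defs
begin

lemma matrix_add_rdistrib': "((A::real^'n^'m) + B) ** C = A ** C + B ** C"
  by (vector matrix_matrix_mult_def sum.distrib[symmetric] field_simps)

lemma zip_cat:
  "xs \<noteq> [] \<Longrightarrow> ys \<noteq> [] \<Longrightarrow> last xs = hd ys \<Longrightarrow>
   zip (xs @ tl ys) (tl (xs @ tl ys)) = zip xs (tl xs) @ zip ys (tl ys)"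
proof (induction xs)
  case Nil then show ?case by simp
next
  case (Cons a xs)
  show ?case
  proof (cases xs)
    case Nil
    then show ?thesis using Cons.prems by (cases ys) auto
  next
    case (Cons b zs)
    then show ?thesis using Cons.IH Cons.prems by auto
  qed
qed

lemma foldr_mat:
  "foldr (\<lambda>(a, b) acc. (g a b :: real^'n^'n) ** acc) xs B
   = foldr (\<lambda>(a, b) acc. g a b ** acc) xs (mat 1) ** B"
  by (induction xs) (auto simp: matrix_mul_assoc)

lemma M0seq_cat:
  assumes "xs \<noteq> []" "ys \<noteq> []" "last xs = hd ys"
  shows "M0seq M M0 (xs @ tl ys) = M0seq M M0 xs ** M0seq M M0 ys"
  unfolding M0seq_def
  apply (simp only: zip_cat[OF assms] foldr_append)
  apply (subst foldr_mat) ..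

lemma seq_len_cat:
  "xs \<noteq> [] \<Longrightarrow> ys \<noteq> [] \<Longrightarrow> seq_len (xs @ tl ys) = seq_len xs + seq_len ys"
  by (cases xs; cases ys) (auto simp: seq_len_def)

lemma BS_idx:
  "(\<forall>j < seq_len sq. (sq ! j, sq ! Suc j) \<in> BS n) \<longleftrightarrow> set (zip sq (tl sq)) \<subseteq> BS n"
  by (auto simp: seq_len_def set_zip nth_tl)

lemma IS_cat:
  assumes "xs \<in> IS l m" "ys \<in> IS m r" "m < r"
  shows "xs @ tl ys \<in> IS l r"
proof -
  have ys: "ys \<noteq> []" "hd ys = m" "last ys = r" "sorted_wrt (<) ys" using assms by (auto simp: IS_def)
  have xs: "xs \<noteq> []" "hd xs = l" "last xs = m" "sorted_wrt (<) xs" using assms by (auto simp: IS_def)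
  obtain y ys' where y: "ys = y # ys'" using ys by (cases ys) auto
  have "ys' \<noteq> []" using y ys assms by auto
  have le: "\<forall>x\<in>set xs. x \<le> m"
  proof
    fix x assume "x \<in> set xs"
    then obtain i where i: "i < length xs" "x = xs ! i" by (auto simp: in_set_conv_nth)
    have lx: "last xs = xs ! (length xs - 1)" using xs by (simp add: last_conv_nth)
    moreover have "i \<le> length xs - 1" using i by simp
    show "x \<le> m"
    proof (cases "i = length xs - 1")
      case True then show ?thesis using i xs(3) lx by simp
    next
      case False
      then have "i < length xs - 1" using i by simp
      then have "xs ! i < xs ! (length xs - 1)" using sorted_wrt_nth_less[OF xs(4)] by simp
      then show ?thesis using i xs(3) lx by simp
    qed
  qed
  have gt: "\<forall>z\<in>set ys'. m < z" using ys y by auto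
  have "sorted_wrt (<) (xs @ ys')" using le gt xs ys y
    by (auto simp: sorted_wrt_append) (meson le_less_trans)
  then show ?thesis using xs ys y \<open>ys' \<noteq> []\<close> by (auto simp: IS_def)
qed


definition Vs :: "(nat \<Rightarrow> 'w::finite rmat) \<Rightarrow> (nat \<Rightarrow> nat \<Rightarrow> 'w rmat) \<Rightarrow> (nat list \<times> int) multiset \<Rightarrow> 'w rmat" where
  "Vs M M0 S = (\<Sum>(sq, \<sigma>) \<in># S. of_int \<sigma> *\<^sub>R M0seq M M0 sq)"

definition catp :: "nat list \<times> int \<Rightarrow> nat list \<times> int \<Rightarrow> nat list \<times> int" where
  "catp x y = (fst x @ tl (fst y), snd x * snd y)"

definition prm :: "(nat list \<times> int) multiset \<Rightarrow> (nat list \<times> int) multiset \<Rightarrow> (nat list \<times> int) multiset" where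
  "prm S T = (\<Sum>x\<in>#S. image_mset (catp x) T)"

definition negm :: "(nat list \<times> int) multiset \<Rightarrow> (nat list \<times> int) multiset" where
  "negm S = image_mset (\<lambda>(s, \<sigma>). (s, - \<sigma>)) S"

lemma Vs_plus: "Vs M M0 (S + T) = Vs M M0 S + Vs M M0 T"
  by (simp add: Vs_def)

lemma Vs_empty: "Vs M M0 {#} = 0"
  by (simp add: Vs_def)

lemma Vs_sum: "Vs M M0 (\<Sum>i\<in>I. F i) = (\<Sum>i\<in>I. Vs M M0 (F i))"
  by (induction I rule: infinite_finite_induct) (auto simp: Vs_plus Vs_empty)

lemma Vs_neg: "Vs M M0 (negm S) = - Vs M M0 S"
  by (induction S) (auto simp: Vs_def negm_def)

lemma Vs_img:
  assumes "\<forall>y\<in>#T. fst x \<noteq> [] \<and> fst y \<noteq> [] \<and> last (fst x) = hd (fst y)"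
  shows "Vs M M0 (image_mset (catp x) T) = (of_int (snd x) *\<^sub>R M0seq M M0 (fst x)) ** Vs M M0 T"
  using assms
proof (induction T)
  case empty then show ?case by (simp add: Vs_def)
next
  case (add y T)
  have "Vs M M0 (image_mset (catp x) (add_mset y T)) =
        of_int (snd x * snd y) *\<^sub>R M0seq M M0 (fst x @ tl (fst y)) + Vs M M0 (image_mset (catp x) T)"
    by (simp add: Vs_def catp_def)
  also have "M0seq M M0 (fst x @ tl (fst y)) = M0seq M M0 (fst x) ** M0seq M M0 (fst y)"
    using add.prems by (intro M0seq_cat) auto
  also have "Vs M M0 (image_mset (catp x) T) = (of_int (snd x) *\<^sub>R M0seq M M0 (fst x)) ** Vs M M0 T"
    using add by auto
  finally show ?case
    by (simp add: Vs_def matrix_add_ldistrib matrix_scalar_ac scalar_matrix_assoc case_prod_beta mult.commute)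
qed

lemma Vs_prm:
  assumes "\<forall>x\<in>#S. \<forall>y\<in>#T. fst x \<noteq> [] \<and> fst y \<noteq> [] \<and> last (fst x) = hd (fst y)"
  shows "Vs M M0 (prm S T) = Vs M M0 S ** Vs M M0 T"
  using assms
proof (induction S)
  case empty then show ?case by (simp add: Vs_def prm_def)
next
  case (add x S)
  have "prm (add_mset x S) T = image_mset (catp x) T + prm S T" by (simp add: prm_def)
  then have "Vs M M0 (prm (add_mset x S) T) = Vs M M0 (image_mset (catp x) T) + Vs M M0 (prm S T)"
    by (simp add: Vs_plus)
  also have "\<dots> = (of_int (snd x) *\<^sub>R M0seq M M0 (fst x)) ** Vs M M0 T + Vs M M0 S ** Vs M M0 T"
    using add by (simp add: Vs_img)
  finally show ?case by (simp add: Vs_def matrix_add_rdistrib' case_prod_beta)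
qed

lemma size_prm: "size (prm S T) = size S * size T"
  by (induction S) (auto simp: prm_def)

lemma size_negm: "size (negm S) = size S"
  by (simp add: negm_def)

lemma size_sum: "size (\<Sum>i\<in>I. F i :: 'a multiset) = (\<Sum>i\<in>I. size (F i))"
  by (induction I rule: infinite_finite_induct) auto

lemma in_prm: "x \<in># prm S T \<Longrightarrow> \<exists>a\<in>#S. \<exists>b\<in>#T. x = catp a b"
  by (induction S) (auto simp: prm_def)

lemma in_negm: "x \<in># negm S \<Longrightarrow> \<exists>a\<in>#S. x = (fst a, - snd a)"
  by (force simp: negm_def)

lemma in_sum: "x \<in># (\<Sum>i\<in>I. F i) \<Longrightarrow> \<exists>i\<in>I. x \<in># F i"
  by (induction I rule: infinite_finite_induct) auto

lemma four_pow: "2 * k + 1 \<le> (4::nat) ^ k"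
  by (induction k) auto


definition good :: "nat \<Rightarrow> nat \<Rightarrow> nat \<Rightarrow> nat \<Rightarrow> nat list \<times> int \<Rightarrow> bool" where
  "good n k l r x \<longleftrightarrow> fst x \<in> IS l r \<and> snd x \<in> {-1, 1} \<and> set (zip (fst x) (tl (fst x))) \<subseteq> BS n
     \<and> real (seq_len (fst x)) \<le> real k * log 2 (real (r - l)) + 1"

lemma BS_lt: "(l, r) \<in> BS n \<Longrightarrow> l < r"
  by (auto simp: BS_def)

lemma good_neg: "good n k l r x \<Longrightarrow> good n k l r (fst x, - snd x)"
  by (auto simp: good_def)

lemma good_cat:
  assumes a: "good n i l m a" and b: "good n j m r b" and ij: "i + j \<le> k" and k: "k \<ge> 1"
    and lm: "m - l = r - m" and lt: "l < m" "m < r"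
  shows "good n k l r (catp a b)"
proof -
  have A: "fst a \<in> IS l m" "snd a \<in> {-1,1}" "set (zip (fst a) (tl (fst a))) \<subseteq> BS n"
    "real (seq_len (fst a)) \<le> real i * log 2 (real (m - l)) + 1" using a by (auto simp: good_def)
  have B: "fst b \<in> IS m r" "snd b \<in> {-1,1}" "set (zip (fst b) (tl (fst b))) \<subseteq> BS n"
    "real (seq_len (fst b)) \<le> real j * log 2 (real (r - m)) + 1" using b by (auto simp: good_def)
  have ne: "fst a \<noteq> []" "fst b \<noteq> []" "last (fst a) = hd (fst b)" using A(1) B(1) by (auto simp: IS_def)
  define d where "d = real (m - l)"
  have d1: "d \<ge> 1" using lt by (simp add: d_def)
  have L0: "log 2 d \<ge> 0" using d1 by simp
  have rl: "real (r - l) = 2 * d" using lm lt by (simp add: d_def)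
  have logrl: "log 2 (real (r - l)) = 1 + log 2 d" using d1 rl by (simp add: log_mult)
  have "real (seq_len (fst (catp a b))) = real (seq_len (fst a)) + real (seq_len (fst b))"
    using ne by (simp add: catp_def seq_len_cat)
  also have "\<dots> \<le> (real i + real j) * log 2 d + 2" using A(4) B(4) lm by (simp add: d_def algebra_simps)
  also have "(real i + real j) * log 2 d \<le> real k * log 2 d"
    using ij L0 by (intro mult_right_mono) auto
  then have "(real i + real j) * log 2 d + 2 \<le> real k * log 2 (real (r - l)) + 1"
    using k logrl by (simp add: algebra_simps)
  finally have len: "real (seq_len (fst (catp a b))) \<le> real k * log 2 (real (r - l)) + 1" .
  have "fst (catp a b) \<in> IS l r" using IS_cat[OF A(1) B(1) lt(2)] by (simp add: catp_def)
  moreover have "snd (catp a b) \<in> {-1,1}" using A(2) B(2) by (auto simp: catp_def)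
  moreover have "set (zip (fst (catp a b)) (tl (fst (catp a b)))) \<subseteq> BS n"
    using A(3) B(3) zip_cat[OF ne] by (simp add: catp_def)
  ultimately show ?thesis using len by (simp add: good_def)
qed

lemma main:
  "(l, r) \<in> BS n \<Longrightarrow> \<exists>S. (\<forall>x\<in>#S. good n k l r x) \<and> Mk M M0 k l r = Vs M M0 S
     \<and> real (size S) \<le> real (r - l) ^ (2 * k)"
proof (induction "r - l" arbitrary: l r k rule: less_induct)
  case less
  have lr: "l < r" using BS_lt[OF less.prems] .
  show ?case
  proof (cases "r - l \<le> 1 \<or> k = 0")
    case True
    have e: "Mk M M0 k l r = Mk M M0 0 l r" using True by (subst (1 2) Mk.simps) auto
    let ?S = "{#([l, r], 1::int)#}"
    have "Vs M M0 ?S = Mk M M0 0 l r" by (simp add: Vs_def M0seq_def M0blk_def)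
    moreover have "good n k l r ([l, r], 1)"
    proof -
      have "log 2 (real (r - l)) \<ge> 0" using lr by simp
      then have "0 \<le> real k * log 2 (real (r - l))" by simp
      then show ?thesis using lr less.prems by (simp add: good_def IS_def seq_len_def)
    qed
    moreover have "1 \<le> real (r - l) ^ (2 * k)" using lr by (simp add: one_le_power)
    ultimately show ?thesis using e by (intro exI[of _ ?S]) auto
  next
    case False
    then have k1: "k \<ge> 1" and rl2: "r - l \<ge> 2" by auto
    obtain i j where ij: "l = i * 2 ^ j" "r = l + 2 ^ j" "r \<le> n" using less.prems by (auto simp: BS_def)
    have "j \<noteq> 0"
    proof
      assume "j = 0" then show False using ij rl2 by simp
    qed
    then obtain j' where j': "j = Suc j'" by (cases j) auto
    define m where "m = l + 2 ^ j'"
    have mid: "(l + r) div 2 = m" using ij j' by (simp add: m_def)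
    have f1: "l = (2 * i) * 2 ^ j'" "m = l + 2 ^ j'" "l < m" "m \<le> n"
      using ij j' by (auto simp: m_def)
    have lm: "(l, m) \<in> BS n"
      unfolding BS_def using f1 by blast
    have f2: "m = (2 * i + 1) * 2 ^ j'" "r = m + 2 ^ j'" "m < r" "r \<le> n"
      using ij j' by (auto simp: m_def)
    have mr: "(m, r) \<in> BS n"
      unfolding BS_def using f2 by blast
    have lt: "l < m" "m < r" and eq: "m - l = r - m" using ij j' by (auto simp: m_def)
    have "\<forall>k. \<exists>S. (\<forall>x\<in>#S. good n k l m x) \<and> Mk M M0 k l m = Vs M M0 S
     \<and> real (size S) \<le> real (m - l) ^ (2 * k)"
      using less.hyps[of m l] lm lt by (auto simp del: Mk.simps)
    then obtain SL where SL: "\<And>k. (\<forall>x\<in>#SL k. good n k l m x) \<and> Mk M M0 k l m = Vs M M0 (SL k)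
     \<and> real (size (SL k)) \<le> real (m - l) ^ (2 * k)" by metis
    have "\<forall>k. \<exists>S. (\<forall>x\<in>#S. good n k m r x) \<and> Mk M M0 k m r = Vs M M0 S
     \<and> real (size S) \<le> real (r - m) ^ (2 * k)"
      using less.hyps[of r m] mr lt by (auto simp del: Mk.simps)
    then obtain SR where SR: "\<And>k. (\<forall>x\<in>#SR k. good n k m r x) \<and> Mk M M0 k m r = Vs M M0 (SR k)
     \<and> real (size (SR k)) \<le> real (r - m) ^ (2 * k)" by metis
    define S where "S = (\<Sum>i\<le>k. prm (SL i) (SR (k - i))) + (\<Sum>i\<le>k - 1. negm (prm (SL i) (SR (k - 1 - i))))"
    have cond: "\<forall>x\<in>#SL a. \<forall>y\<in>#SR b. fst x \<noteq> [] \<and> fst y \<noteq> [] \<and> last (fst x) = hd (fst y)" for a b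
      using SL[of a] SR[of b] by (auto simp: good_def IS_def)
    have "Mk M M0 k l r = (\<Sum>i\<le>k. Mk M M0 i l m ** Mk M M0 (k - i) m r)
            - (\<Sum>i\<le>k - 1. Mk M M0 i l m ** Mk M M0 (k - 1 - i) m r)"
      using False mid by (subst Mk.simps) (simp add: Let_def)
    also have "\<dots> = Vs M M0 S"
      unfolding S_def Vs_plus Vs_sum Vs_neg using SL SR cond
      by (simp add: Vs_prm sum_negf)
    finally have V: "Mk M M0 k l r = Vs M M0 S" .
    have G: "\<forall>x\<in>#S. good n k l r x"
    proof
      fix x assume "x \<in># S"
      then consider (a) "x \<in># (\<Sum>i\<le>k. prm (SL i) (SR (k - i)))"
        | (b) "x \<in># (\<Sum>i\<le>k - 1. negm (prm (SL i) (SR (k - 1 - i))))"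
        unfolding S_def by auto
      then show "good n k l r x"
      proof cases
        case a
        then obtain i where i: "i \<le> k" "x \<in># prm (SL i) (SR (k - i))" by (auto dest: in_sum)
        then obtain u v where "u \<in># SL i" "v \<in># SR (k - i)" "x = catp u v" by (auto dest: in_prm)
        then show ?thesis using SL SR good_cat[of n i l m u "k - i" r v k, OF _ _ _ k1 eq lt] i by auto
      next
        case b
        then obtain i where i: "i \<le> k - 1" "x \<in># negm (prm (SL i) (SR (k - 1 - i)))" by (auto dest: in_sum)
        then obtain y where y: "y \<in># prm (SL i) (SR (k - 1 - i))" "x = (fst y, - snd y)" by (auto dest: in_negm)
        then obtain u v where "u \<in># SL i" "v \<in># SR (k - 1 - i)" "y = catp u v" by (auto dest: in_prm)
        then have "good n k l r y" using SL SR good_cat[of n i l m u "k - 1 - i" r v k, OF _ _ _ k1 eq lt] i by auto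
        then show ?thesis using y good_neg by auto
      qed
    qed
    define d where "d = real (m - l)"
    have d1: "d \<ge> 1" using lt by (simp add: d_def)
    have rld: "real (r - l) = 2 * d" using eq lt by (simp add: d_def)
    have t1: "real (size (SL i)) * real (size (SR (k - i))) \<le> d ^ (2 * k)" if "i \<le> k" for i
    proof -
      have "real (size (SL i)) * real (size (SR (k - i))) \<le> d ^ (2 * i) * d ^ (2 * (k - i))"
        using SL[of i] SR[of "k - i"] eq by (intro mult_mono) (auto simp: d_def)
      also have "\<dots> = d ^ (2 * k)"
      proof -
        have e: "2 * i + 2 * (k - i) = 2 * k" using that by simp
        show ?thesis by (simp only: power_add[symmetric] e)
      qed
      finally show ?thesis .
    qed
    have t2: "real (size (SL i)) * real (size (SR (k - 1 - i))) \<le> d ^ (2 * k)" if "i \<le> k - 1" for i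
    proof -
      have "real (size (SL i)) * real (size (SR (k - 1 - i))) \<le> d ^ (2 * i) * d ^ (2 * (k - 1 - i))"
        using SL[of i] SR[of "k - 1 - i"] eq by (intro mult_mono) (auto simp: d_def)
      also have "\<dots> = d ^ (2 * (k - 1))"
      proof -
        have e: "2 * i + 2 * (k - 1 - i) = 2 * (k - 1)" using that by simp
        show ?thesis by (simp only: power_add[symmetric] e)
      qed
      also have "\<dots> \<le> d ^ (2 * k)" using d1 by (intro power_increasing) auto
      finally show ?thesis .
    qed
    have "real (size S) = (\<Sum>i\<le>k. real (size (SL i)) * real (size (SR (k - i))))
        + (\<Sum>i\<le>k - 1. real (size (SL i)) * real (size (SR (k - 1 - i))))"
      unfolding S_def by (simp add: size_sum size_prm size_negm)
    also have "\<dots> \<le> (\<Sum>i\<le>k. d ^ (2 * k)) + (\<Sum>i\<le>k - 1. d ^ (2 * k))"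
      using t1 t2 by (intro add_mono sum_mono) auto
    also have "\<dots> = real (2 * k + 1) * d ^ (2 * k)" using k1 by (simp add: algebra_simps)
    also have "\<dots> \<le> real (4 ^ k) * d ^ (2 * k)"
      proof -
      have fp: "real (2 * k + 1) \<le> real (4 ^ k)" by (simp only: of_nat_le_iff four_pow)
      show ?thesis using fp d1 by (intro mult_right_mono) auto
    qed
    also have "\<dots> = real (r - l) ^ (2 * k)" unfolding rld
      by (simp add: power_mult_distrib power_mult)
    finally show ?thesis using V G by blast
  qed
qed


theorem lemma3p10:
  fixes n :: nat and M :: "nat \<Rightarrow> real ^ 'w::finite ^ 'w"
    and M0 :: "nat \<Rightarrow> nat \<Rightarrow> real ^ 'w ^ 'w"
  assumes "\<exists>p. n = 2 ^ p"
  shows "\<forall>k. \<forall>(l, r) \<in> BS n. \<exists>S :: (nat list \<times> int) multiset.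
           (\<forall>(sq, \<sigma>) \<in> set_mset S. sq \<in> IS l r \<and> \<sigma> \<in> {-1, 1}
               \<and> (\<forall>j < seq_len sq. (sq ! j, sq ! Suc j) \<in> BS n)) \<and>
           Mk M M0 k l r = (\<Sum>(sq, \<sigma>) \<in># S. of_int \<sigma> *\<^sub>R M0seq M M0 sq) \<and>
           real (size S) \<le> real (r - l) ^ (2 * k) \<and>
           (\<forall>(sq, \<sigma>) \<in> set_mset S. real (seq_len sq) \<le> real k * log 2 (real (r - l)) + 1)"
proof (intro allI ballI, clarify)
  fix k l r assume lr: "(l, r) \<in> BS n"
  obtain S where S: "\<forall>x\<in>#S. good n k l r x" "Mk M M0 k l r = Vs M M0 S"
    "real (size S) \<le> real (r - l) ^ (2 * k)"
    using main[OF lr, of k M M0] by blast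
  show "\<exists>S :: (nat list \<times> int) multiset.
           (\<forall>(sq, \<sigma>) \<in> set_mset S. sq \<in> IS l r \<and> \<sigma> \<in> {-1, 1}
               \<and> (\<forall>j < seq_len sq. (sq ! j, sq ! Suc j) \<in> BS n)) \<and>
           Mk M M0 k l r = (\<Sum>(sq, \<sigma>) \<in># S. of_int \<sigma> *\<^sub>R M0seq M M0 sq) \<and>
           real (size S) \<le> real (r - l) ^ (2 * k) \<and>
           (\<forall>(sq, \<sigma>) \<in> set_mset S. real (seq_len sq) \<le> real k * log 2 (real (r - l)) + 1)"
  proof (rule exI[of _ S])
    have A: "\<forall>x\<in>#S. fst x \<in> IS l r \<and> snd x \<in> {-1,1} \<and> (\<forall>j<seq_len (fst x). (fst x ! j, fst x ! Suc j) \<in> BS n)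
       \<and> real (seq_len (fst x)) \<le> real k * log 2 (real (r - l)) + 1"
      using S(1) unfolding good_def BS_idx by blast
    show "(\<forall>(sq, \<sigma>) \<in> set_mset S. sq \<in> IS l r \<and> \<sigma> \<in> {-1, 1}
               \<and> (\<forall>j < seq_len sq. (sq ! j, sq ! Suc j) \<in> BS n)) \<and>
           Mk M M0 k l r = (\<Sum>(sq, \<sigma>) \<in># S. of_int \<sigma> *\<^sub>R M0seq M M0 sq) \<and>
           real (size S) \<le> real (r - l) ^ (2 * k) \<and>
           (\<forall>(sq, \<sigma>) \<in> set_mset S. real (seq_len sq) \<le> real k * log 2 (real (r - l)) + 1)"
      using A S(2,3) unfolding Vs_def by (fastforce simp del: Mk.simps)
  qed
qed

end
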